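(* Let $p,q\ge0$ with $n=p+q>0$, and let $\Gamma=\{(a_1,\dots,a_n)\in\mathbb{Z}^n\mid a_1+\cdots+a_n\in2\mathbb{Z}\}$. For $A\in\{A^+_{p|q},A^-_{q|p}\}$ let $C(A)=\bigoplus_{d\in\Gamma}A_d$ be the subsuperalgebra of elements whose $\mathbb{Z}^n$-support lies in $\Gamma$. Then $C(A^+_{p|q})$ and $C(A^-_{q|p})$ are isomorphic superalgebras.
   Context: $\Bbbk$ is an algebraically closed field of characteristic $0$. For integers $a,b\ge0$, $N=a+b$, and a sign $\pm$, the superalgebra $A^\pm_{a|b}$ is generated by $x_i,\partial_i$ ($1\le i\le N$), of parity $0$ for $i\le a$ and $1$ for $i>a$, subject to $[\partial_i,x_j]_\pm=\delta_{ij}$, $[x_i,x_j]_\pm=[\partial_i,\partial_j]_\pm=0$, with $[u,v]_\pm=uv\pm(-1)^{p(u)p(v)}vu$. It is $\mathbb{Z}^N$-graded by $\deg x_i=\mathbf{e}_i$, $\deg\partial_i=-\mathbf{e}_i$. (Thus $A^+_{p|q}$ has $p$ even Clifford pairs and $q$ odd Weyl pairs, while $A^-_{q|p}$ has $q$ even Weyl pairs and $p$ odd Clifford pairs.) *)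

theory Defs
  imports "HOL-Computational_Algebra.Polynomial"
begin

datatype gen = X nat | D nat   (* X i = x_i,  D i = \<partial>_i *)

fun gidx :: "gen \<Rightarrow> nat" where
  "gidx (X i) = i" | "gidx (D i) = i"

definition gpar :: "nat \<Rightarrow> gen \<Rightarrow> nat" where
  "gpar a g = (if gidx g \<le> a then 0 else 1)"

definition word_par :: "nat \<Rightarrow> gen list \<Rightarrow> nat" where
  "word_par a w = (sum_list (map (gpar a) w)) mod 2"

definition wdeg :: "gen list \<Rightarrow> nat \<Rightarrow> int" where
  "wdeg w i = int (length (filter (\<lambda>g. g = X i) w)) - int (length (filter (\<lambda>g. g = D i) w))"

definition letters :: "nat \<Rightarrow> gen set" where
  "letters N = {g. 1 \<le> gidx g \<and> gidx g \<le> N}"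

type_synonym 'k fa = "gen list \<Rightarrow> 'k"

(* elements of the free algebra k<x_1..x_N, d_1..d_N>: finitely supported coefficient functions *)
definition fa_carrier :: "nat \<Rightarrow> ('k::zero) fa set" where
  "fa_carrier N = {f. finite {w. f w \<noteq> 0} \<and> (\<forall>w. f w \<noteq> 0 \<longrightarrow> set w \<subseteq> letters N)}"

definition fa_zero :: "('k::zero) fa" where "fa_zero = (\<lambda>w. 0)"
definition fa_one :: "('k::{zero,one}) fa" where "fa_one = (\<lambda>w. if w = [] then 1 else 0)"
definition mono :: "gen list \<Rightarrow> ('k::{zero,one}) fa" where "mono u = (\<lambda>w. if w = u then 1 else 0)"
definition fa_add :: "('k::plus) fa \<Rightarrow> 'k fa \<Rightarrow> 'k fa" where "fa_add f g = (\<lambda>w. f w + g w)"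
definition fa_sub :: "('k::minus) fa \<Rightarrow> 'k fa \<Rightarrow> 'k fa" where "fa_sub f g = (\<lambda>w. f w - g w)"
definition fa_smult :: "'k::times \<Rightarrow> 'k fa \<Rightarrow> 'k fa" where "fa_smult c f = (\<lambda>w. c * f w)"
definition fa_mult :: "('k::comm_ring_1) fa \<Rightarrow> 'k fa \<Rightarrow> 'k fa" where
  "fa_mult f g = (\<lambda>w. \<Sum>i\<le>length w. f (take i w) * g (drop i w))"

(* s = True for the sign +, s = False for the sign -.
   sbr s a u v = [u,v]_\<pm> = uv \<pm> (-1)^{p(u)p(v)} vu  for generators u v *)
definition sbr :: "bool \<Rightarrow> nat \<Rightarrow> gen \<Rightarrow> gen \<Rightarrow> ('k::comm_ring_1) fa" where
  "sbr s a u v = fa_add (mono [u, v])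
      (fa_smult ((if s then 1 else -1) * (-1) ^ (gpar a u * gpar a v)) (mono [v, u]))"

definition rels :: "bool \<Rightarrow> nat \<Rightarrow> nat \<Rightarrow> ('k::comm_ring_1) fa set" where
  "rels s a N =
     {fa_sub (sbr s a (D i) (X j)) (if i = j then fa_one else fa_zero) | i j. i \<in> {1..N} \<and> j \<in> {1..N}}
   \<union> {sbr s a (X i) (X j) | i j. i \<in> {1..N} \<and> j \<in> {1..N}}
   \<union> {sbr s a (D i) (D j) | i j. i \<in> {1..N} \<and> j \<in> {1..N}}"

inductive_set rel_ideal :: "bool \<Rightarrow> nat \<Rightarrow> nat \<Rightarrow> ('k::comm_ring_1) fa set"
  for s :: bool and a :: nat and N :: nat where
  zero: "fa_zero \<in> rel_ideal s a N"
| gen: "r \<in> rels s a N \<Longrightarrow> set u \<subseteq> letters N \<Longrightarrow> set v \<subseteq> letters N \<Longrightarrow>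
          fa_mult (fa_mult (mono u) r) (mono v) \<in> rel_ideal s a N"
| add: "f \<in> rel_ideal s a N \<Longrightarrow> g \<in> rel_ideal s a N \<Longrightarrow> fa_add f g \<in> rel_ideal s a N"
| smult: "f \<in> rel_ideal s a N \<Longrightarrow> fa_smult c f \<in> rel_ideal s a N"

(* the class of f in A^{s}_{a|b} = free algebra / ideal *)
definition cls :: "bool \<Rightarrow> nat \<Rightarrow> nat \<Rightarrow> ('k::comm_ring_1) fa \<Rightarrow> 'k fa set" where
  "cls s a b f = {g \<in> fa_carrier (a + b). fa_sub f g \<in> rel_ideal s a (a + b)}"

definition Gamma :: "nat \<Rightarrow> (nat \<Rightarrow> int) set" where
  "Gamma N = {d. even (\<Sum>i\<in>{1..N}. d i)}"

(* representatives of C(A) = \<Oplus>_{d \<in> Gamma} A_d : sums of words of degree in Gamma *)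
definition CA :: "bool \<Rightarrow> nat \<Rightarrow> nat \<Rightarrow> ('k::comm_ring_1) fa set" where
  "CA s a b = {f \<in> fa_carrier (a + b). \<forall>w. f w \<noteq> 0 \<longrightarrow> wdeg w \<in> Gamma (a + b)}"

definition CA_par :: "bool \<Rightarrow> nat \<Rightarrow> nat \<Rightarrow> nat \<Rightarrow> ('k::comm_ring_1) fa set" where
  "CA_par s a b e = {f \<in> CA s a b. \<forall>w. f w \<noteq> 0 \<longrightarrow> word_par a w = e}"

definition C_super_iso :: "('k::comm_ring_1) itself \<Rightarrow> bool \<Rightarrow> nat \<Rightarrow> nat \<Rightarrow> bool \<Rightarrow> nat \<Rightarrow> nat \<Rightarrow> bool" where
  "C_super_iso (_ :: 'k itself) s a b s' a' b' \<longleftrightarrow>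
    (\<exists>\<Phi> :: 'k fa set \<Rightarrow> 'k fa set.
       bij_betw \<Phi> (cls s a b ` CA s a b) (cls s' a' b' ` CA s' a' b')
     \<and> (\<forall>f \<in> CA s a b. \<forall>g \<in> CA s a b. \<forall>h h'.
           h \<in> fa_carrier (a' + b') \<and> h' \<in> fa_carrier (a' + b')
           \<and> \<Phi> (cls s a b f) = cls s' a' b' h \<and> \<Phi> (cls s a b g) = cls s' a' b' h' \<longrightarrow>
             \<Phi> (cls s a b (fa_add f g)) = cls s' a' b' (fa_add h h')
           \<and> \<Phi> (cls s a b (fa_mult f g)) = cls s' a' b' (fa_mult h h'))
     \<and> (\<forall>f \<in> CA s a b. \<forall>c h.
           h \<in> fa_carrier (a' + b') \<and> \<Phi> (cls s a b f) = cls s' a' b' h \<longrightarrow>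
             \<Phi> (cls s a b (fa_smult c f)) = cls s' a' b' (fa_smult c h))
     \<and> \<Phi> (cls s a b fa_one) = cls s' a' b' fa_one
     \<and> (\<forall>e \<in> {0, 1}. \<Phi> ` (cls s a b ` CA_par s a b e) = cls s' a' b' ` CA_par s' a' b' e))"

end

theory Submission
  imports Defs "HOL-Library.Function_Algebras"
begin


lemma fa_add_eq: "fa_add f g = f + g" by (auto simp: fa_add_def)
lemma fa_zero_eq: "fa_zero = 0" by (auto simp: fa_zero_def)

lemma sum_fun_apply': "(sum F S) w = (\<Sum>x\<in>S. F x w)"
  by (induction S rule: infinite_finite_induct) auto

lemma mult_add_left: "fa_mult (fa_add f g) h = fa_add (fa_mult f h) (fa_mult g h)"
  by (auto simp: fa_mult_def fa_add_def distrib_right sum.distrib)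
lemma mult_add_right: "fa_mult h (fa_add f g) = fa_add (fa_mult h f) (fa_mult h g)"
  by (auto simp: fa_mult_def fa_add_def distrib_left sum.distrib)
lemma mult_sub_left: "fa_mult (fa_sub f g) h = fa_sub (fa_mult f h) (fa_mult g h)"
  by (auto simp: fa_mult_def fa_sub_def left_diff_distrib sum_subtractf)
lemma mult_sub_right: "fa_mult h (fa_sub f g) = fa_sub (fa_mult h f) (fa_mult h g)"
  by (auto simp: fa_mult_def fa_sub_def right_diff_distrib sum_subtractf)
lemma mult_smult_left: "fa_mult (fa_smult c f) h = fa_smult c (fa_mult f h)"
  by (auto simp: fa_mult_def fa_smult_def sum_distrib_left mult.assoc)
lemma mult_smult_right: "fa_mult h (fa_smult c f) = fa_smult c (fa_mult h f)"
  by (auto simp: fa_mult_def fa_smult_def sum_distrib_left mult.left_commute)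
lemma mult_zero_left: "fa_mult 0 h = 0" by (auto simp: fa_mult_def)
lemma mult_zero_right: "fa_mult h 0 = 0" by (auto simp: fa_mult_def)

lemma mult_sum_right: fixes F :: "'a \<Rightarrow> ('k::comm_ring_1) fa" shows "fa_mult h (sum F S) = (\<Sum>x\<in>S. fa_mult h (F x))"
proof (induction S rule: infinite_finite_induct)
  case (insert x S)
  have e1: "sum F (insert x S) = F x + sum F S" using insert.hyps by (rule sum.insert)
  have e2: "(\<Sum>y\<in>insert x S. G y) = G x + (\<Sum>y\<in>S. G y)" for G :: "'a \<Rightarrow> 'k fa" using insert.hyps by (rule sum.insert)
  show ?case unfolding e1 e2 mult_add_right[of h "F x" "sum F S", unfolded fa_add_eq] insert.IH by (rule refl)
qed (simp_all add: fa_mult_def)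
lemma mult_sum_left: fixes F :: "'a \<Rightarrow> ('k::comm_ring_1) fa" shows "fa_mult (sum F S) h = (\<Sum>x\<in>S. fa_mult (F x) h)"
proof (induction S rule: infinite_finite_induct)
  case (insert x S)
  have e1: "sum F (insert x S) = F x + sum F S" using insert.hyps by (rule sum.insert)
  have e2: "(\<Sum>y\<in>insert x S. G y) = G x + (\<Sum>y\<in>S. G y)" for G :: "'a \<Rightarrow> 'k fa" using insert.hyps by (rule sum.insert)
  show ?case unfolding e1 e2 mult_add_left[of "F x" "sum F S" h, unfolded fa_add_eq] insert.IH by (rule refl)
qed (simp_all add: fa_mult_def)

lemma take_app_eq: "i \<le> length (u @ x) \<Longrightarrow> take i (u @ x) = u \<longleftrightarrow> i = length u"
proof
  assume "i \<le> length (u @ x)" "take i (u @ x) = u"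
  then have "length (take i (u@x)) = length u" by simp
  then show "i = length u" using \<open>i \<le> _\<close> by simp
qed simp

lemma mono_left_app: "fa_mult (mono u) Y (u @ x) = (Y x :: 'k::comm_ring_1)"
proof -
  have "fa_mult (mono u) Y (u @ x) = (\<Sum>i\<le>length (u@x). if i = length u then Y x else 0)"
    unfolding fa_mult_def mono_def
  proof (rule sum.cong)
    fix i assume "i \<in> {..length (u@x)}"
    then have "take i (u @ x) = u \<longleftrightarrow> i = length u" by (intro take_app_eq) auto
    then show "(if take i (u @ x) = u then 1 else 0) * Y (drop i (u @ x)) = (if i = length u then Y x else 0)"
      by auto
  qed simp
  also have "\<dots> = Y x" by (subst sum.delta) auto
  finally show ?thesis .
qed

lemma mono_left_not: "(\<forall>x. z \<noteq> u @ x) \<Longrightarrow> fa_mult (mono u) Y z = (0 :: 'k::comm_ring_1)"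
  unfolding fa_mult_def
proof (rule sum.neutral, intro ballI)
  fix i assume "\<forall>x. z \<noteq> u @ x"
  then have "take i z \<noteq> u" by (metis append_take_drop_id)
  then show "mono u (take i z) * Y (drop i z) = 0" by (simp add: mono_def)
qed

lemma drop_app_eq: "i \<le> length (x @ v) \<Longrightarrow> drop i (x @ v) = v \<longleftrightarrow> i = length x"
proof
  assume "i \<le> length (x @ v)" "drop i (x @ v) = v"
  then have "length (drop i (x@v)) = length v" by simp
  then show "i = length x" using \<open>i \<le> _\<close> by simp
qed simp

lemma mono_right_app: "fa_mult Y (mono v) (x @ v) = (Y x :: 'k::comm_ring_1)"
proof -
  have "fa_mult Y (mono v) (x @ v) = (\<Sum>i\<le>length (x@v). if i = length x then Y x else 0)"
    unfolding fa_mult_def mono_def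
  proof (rule sum.cong)
    fix i assume "i \<in> {..length (x@v)}"
    then have "drop i (x @ v) = v \<longleftrightarrow> i = length x" by (intro drop_app_eq) auto
    then show "Y (take i (x @ v)) * (if drop i (x @ v) = v then 1 else 0) = (if i = length x then Y x else 0)"
      by auto
  qed simp
  also have "\<dots> = Y x" by (subst sum.delta) auto
  finally show ?thesis .
qed

lemma mono_right_not: "(\<forall>x. z \<noteq> x @ v) \<Longrightarrow> fa_mult Y (mono v) z = (0 :: 'k::comm_ring_1)"
  unfolding fa_mult_def
proof (rule sum.neutral, intro ballI)
  fix i assume "\<forall>x. z \<noteq> x @ v"
  then have "drop i z \<noteq> v" by (metis append_take_drop_id)
  then show "Y (take i z) * mono v (drop i z) = 0" by (simp add: mono_def)
qed

lemma mono_mult: "fa_mult (mono u) (mono v) = (mono (u @ v) :: 'k::comm_ring_1 fa)"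
proof
  fix z
  show "fa_mult (mono u) (mono v) z = (mono (u @ v) :: 'k fa) z"
  proof (cases "\<exists>x. z = u @ x")
    case True
    then obtain x where z: "z = u @ x" by blast
    show ?thesis unfolding z using mono_left_app[of u "mono v" x] by (simp add: mono_def)
  next
    case False
    then have "fa_mult (mono u) (mono v) z = (0::'k)" by (intro mono_left_not) auto
    moreover have "(mono (u @ v) :: 'k fa) z = 0" using False by (auto simp: mono_def)
    ultimately show ?thesis by simp
  qed
qed

lemma assoc1: "fa_mult (fa_mult Y (mono v)) (mono w) = (fa_mult Y (mono (v @ w)) :: 'k::comm_ring_1 fa)"
proof
  fix z
  show "fa_mult (fa_mult Y (mono v)) (mono w) z = (fa_mult Y (mono (v @ w)) :: 'k fa) z"
  proof (cases "\<exists>x. z = x @ v @ w")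
    case True
    then obtain x where z: "z = x @ v @ w" by blast
    have "fa_mult (fa_mult Y (mono v)) (mono w) z = fa_mult Y (mono v) (x @ v)"
      unfolding z by (metis append_assoc mono_right_app)
    also have "\<dots> = Y x" by (rule mono_right_app)
    finally show ?thesis unfolding z using mono_right_app[of Y "v @ w" x] by simp
  next
    case False
    then have r: "fa_mult Y (mono (v @ w)) z = (0::'k)" by (intro mono_right_not) auto
    show ?thesis
    proof (cases "\<exists>y. z = y @ w")
      case True
      then obtain y where z: "z = y @ w" by blast
      have "\<forall>x. y \<noteq> x @ v" using False z by auto
      then have "fa_mult Y (mono v) y = 0" by (rule mono_right_not)
      then show ?thesis using r unfolding z by (simp add: mono_right_app)
    next
      case False
      then show ?thesis using r by (simp add: mono_right_not)
    qed
  qed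
qed

lemma assoc3: "fa_mult (mono w) (fa_mult (mono u) Y) = (fa_mult (mono (w @ u)) Y :: 'k::comm_ring_1 fa)"
proof
  fix z
  show "fa_mult (mono w) (fa_mult (mono u) Y) z = (fa_mult (mono (w @ u)) Y :: 'k fa) z"
  proof (cases "\<exists>x. z = w @ u @ x")
    case True
    then obtain x where z: "z = w @ u @ x" by blast
    have "fa_mult (mono w) (fa_mult (mono u) Y) z = fa_mult (mono u) Y (u @ x)"
      unfolding z by (rule mono_left_app)
    also have "\<dots> = Y x" by (rule mono_left_app)
    finally show ?thesis unfolding z using mono_left_app[of "w @ u" Y x] by simp
  next
    case False
    then have r: "fa_mult (mono (w @ u)) Y z = (0::'k)" by (intro mono_left_not) auto
    show ?thesis
    proof (cases "\<exists>y. z = w @ y")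
      case True
      then obtain y where z: "z = w @ y" by blast
      have "\<forall>x. y \<noteq> u @ x" using False z by auto
      then have "fa_mult (mono u) Y y = 0" by (rule mono_left_not)
      then show ?thesis using r unfolding z by (simp add: mono_left_app)
    next
      case False
      then show ?thesis using r by (simp add: mono_left_not)
    qed
  qed
qed

lemma assoc2: "fa_mult (mono w) (fa_mult Y (mono v)) = (fa_mult (fa_mult (mono w) Y) (mono v) :: 'k::comm_ring_1 fa)"
proof
  fix z
  show "fa_mult (mono w) (fa_mult Y (mono v)) z = (fa_mult (fa_mult (mono w) Y) (mono v) :: 'k fa) z"
  proof (cases "\<exists>x. z = w @ x @ v")
    case True
    then obtain x where z: "z = w @ x @ v" by blast
    have "fa_mult (mono w) (fa_mult Y (mono v)) z = Y x"
      unfolding z by (simp add: mono_left_app mono_right_app)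
    moreover have "fa_mult (fa_mult (mono w) Y) (mono v) z = Y x"
      unfolding z by (metis append_assoc mono_left_app mono_right_app)
    ultimately show ?thesis by simp
  next
    case False
    have l: "fa_mult (mono w) (fa_mult Y (mono v)) z = (0::'k)"
    proof (cases "\<exists>y. z = w @ y")
      case True
      then obtain y where z: "z = w @ y" by blast
      have "\<forall>x. y \<noteq> x @ v" using False z by auto
      then show ?thesis unfolding z by (simp add: mono_left_app mono_right_not)
    qed (simp add: mono_left_not)
    have r: "fa_mult (fa_mult (mono w) Y) (mono v) z = (0::'k)"
    proof (cases "\<exists>y. z = y @ v")
      case True
      then obtain y where z: "z = y @ v" by blast
      have "\<forall>x. y \<noteq> w @ x" using False z by auto
      then show ?thesis unfolding z by (simp add: mono_right_app mono_left_not)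
    qed (simp add: mono_right_not)
    show ?thesis using l r by simp
  qed
qed

lemma decomp:
  assumes "g \<in> fa_carrier N"
  shows "g = (\<Sum>w\<in>{w. g w \<noteq> 0}. fa_smult (g w) (mono w :: 'k::comm_ring_1 fa))"
proof
  fix z
  have fin: "finite {w. g w \<noteq> 0}" using assms by (simp add: fa_carrier_def)
  have "(\<Sum>w\<in>{w. g w \<noteq> 0}. fa_smult (g w) (mono w :: 'k fa)) z
        = (\<Sum>w\<in>{w. g w \<noteq> 0}. if w = z then g z else 0)"
    unfolding sum_fun_apply' by (rule sum.cong) (auto simp: fa_smult_def mono_def)
  also have "\<dots> = (if z \<in> {w. g w \<noteq> 0} then g z else 0)" using fin by (rule sum.delta)
  also have "\<dots> = g z" by auto
  finally show "g z = (\<Sum>w\<in>{w. g w \<noteq> 0}. fa_smult (g w) (mono w :: 'k fa)) z" by simp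
qed

lemma mult_fz_left: "fa_mult fa_zero h = fa_zero" by (simp add: fa_mult_def fa_zero_def)
lemma mult_fz_right: "fa_mult h fa_zero = fa_zero" by (simp add: fa_mult_def fa_zero_def)

lemma I_sum: "finite S \<Longrightarrow> (\<And>x. x \<in> S \<Longrightarrow> F x \<in> rel_ideal s a N) \<Longrightarrow> sum F S \<in> rel_ideal s a N"
proof (induction S rule: finite_induct)
  case empty
  then show ?case using rel_ideal.zero[of s a N] by (simp only: fa_zero_eq sum.empty)
next
  case (insert x S)
  have Fx: "F x \<in> rel_ideal s a N" using insert by simp
  have IH: "sum F S \<in> rel_ideal s a N" using insert by simp
  show ?case unfolding sum.insert[OF insert.hyps] using rel_ideal.add[OF Fx IH] unfolding fa_add_eq .
qed

lemma I_sub: "f \<in> rel_ideal s a N \<Longrightarrow> g \<in> rel_ideal s a N \<Longrightarrow> fa_sub f g \<in> rel_ideal s a N"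
proof -
  assume f: "f \<in> rel_ideal s a N" and g: "g \<in> rel_ideal s a N"
  have "fa_sub f g = fa_add f (fa_smult (-1) g)" by (auto simp: fa_sub_def fa_add_def fa_smult_def)
  then show ?thesis using f g by (simp add: rel_ideal.add rel_ideal.smult)
qed

lemma I_mult_right:
  assumes "f \<in> rel_ideal s a N" "g \<in> fa_carrier N"
  shows "fa_mult f g \<in> rel_ideal s a N"
  using assms(1)
proof (induction rule: rel_ideal.induct)
  case zero
  then show ?case using rel_ideal.zero by (simp only: mult_fz_left)
next
  case (gen r u v)
  have "fa_mult (fa_mult (fa_mult (mono u) r) (mono v)) g
      = (\<Sum>w\<in>{w. g w \<noteq> 0}. fa_mult (fa_mult (fa_mult (mono u) r) (mono v)) (fa_smult (g w) (mono w)))"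
    by (subst decomp[OF assms(2)]) (rule mult_sum_right)
  also have "\<dots> \<in> rel_ideal s a N"
  proof (rule I_sum)
    show "finite {w. g w \<noteq> 0}" using assms(2) by (simp add: fa_carrier_def)
  next
    fix w assume "w \<in> {w. g w \<noteq> 0}"
    then have "set w \<subseteq> letters N" using assms(2) by (auto simp: fa_carrier_def)
    then show "fa_mult (fa_mult (fa_mult (mono u) r) (mono v)) (fa_smult (g w) (mono w)) \<in> rel_ideal s a N"
      using gen by (auto simp: mult_smult_right assoc1 intro!: rel_ideal.smult rel_ideal.gen)
  qed
  finally show ?case .
next
  case (add f g)
  then show ?case by (simp add: mult_add_left rel_ideal.add)
next
  case (smult f c)
  then show ?case by (simp add: mult_smult_left rel_ideal.smult)
qed

lemma I_mult_left:
  assumes "f \<in> rel_ideal s a N" "g \<in> fa_carrier N"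
  shows "fa_mult g f \<in> rel_ideal s a N"
  using assms(1)
proof (induction rule: rel_ideal.induct)
  case zero
  then show ?case using rel_ideal.zero by (simp only: mult_fz_right)
next
  case (gen r u v)
  have "fa_mult g (fa_mult (fa_mult (mono u) r) (mono v))
      = (\<Sum>w\<in>{w. g w \<noteq> 0}. fa_mult (fa_smult (g w) (mono w)) (fa_mult (fa_mult (mono u) r) (mono v)))"
    by (subst decomp[OF assms(2)]) (rule mult_sum_left)
  also have "\<dots> \<in> rel_ideal s a N"
  proof (rule I_sum)
    show "finite {w. g w \<noteq> 0}" using assms(2) by (simp add: fa_carrier_def)
  next
    fix w assume "w \<in> {w. g w \<noteq> 0}"
    then have "set w \<subseteq> letters N" using assms(2) by (auto simp: fa_carrier_def)
    then show "fa_mult (fa_smult (g w) (mono w)) (fa_mult (fa_mult (mono u) r) (mono v)) \<in> rel_ideal s a N"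
      using gen by (auto simp: mult_smult_left assoc2 assoc3 intro!: rel_ideal.smult rel_ideal.gen)
  qed
  finally show ?case .
next
  case (add f g)
  then show ?case by (simp add: mult_add_right rel_ideal.add)
next
  case (smult f c)
  then show ?case by (simp add: mult_smult_right rel_ideal.smult)
qed




fun isD :: "gen \<Rightarrow> bool" where "isD (X i) = False" | "isD (D i) = True"
fun mapg :: "(nat \<Rightarrow> nat) \<Rightarrow> gen \<Rightarrow> gen" where
  "mapg \<pi> (X i) = X (\<pi> i)" | "mapg \<pi> (D i) = D (\<pi> i)"
fun E :: "(nat \<Rightarrow> bool) \<Rightarrow> gen list \<Rightarrow> nat" where
  "E P [] = 0"
| "E P (g # w) = E P w + (if P (gidx g) then length w + (if isD g then 1 else 0) else 0)"
definition sg :: "(nat \<Rightarrow> bool) \<Rightarrow> gen list \<Rightarrow> 'k::comm_ring_1" where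
  "sg P w = (-1) ^ (E P w)"

lemma E_append: "E P (x @ y) = E P x + E P y + length (filter (\<lambda>g. P (gidx g)) x) * length y"
  by (induction x) (auto simp: algebra_simps)

lemma sg_append_even: "even (length y) \<Longrightarrow> sg P (x @ y) = (sg P x * sg P y :: 'k::comm_ring_1)"
  by (auto simp: sg_def E_append power_add)

lemma sg_sq: "sg P w * sg P w = (1 :: 'k::comm_ring_1)"
  by (simp add: sg_def power_add[symmetric])

lemma E_swap: "E P (u @ [g1, g2] @ v) + (if P (gidx g2) then 1 else 0) = E P (u @ [g2, g1] @ v) + (if P (gidx g1) then 1 else 0)"
  by (simp add: E_append)

lemma sg_swap: "sg P (u @ [g2, g1] @ v) = (if P (gidx g1) = P (gidx g2) then 1 else -1) * (sg P (u @ [g1, g2] @ v) :: 'k::comm_ring_1)"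
proof -
  have h: "(-1::'k) ^ (E P (u @ [g1, g2] @ v) + (if P (gidx g2) then 1 else 0)) = (-1) ^ (E P (u @ [g2, g1] @ v) + (if P (gidx g1) then 1 else 0))"
    by (simp only: E_swap)
  show ?thesis using h by (auto simp: sg_def power_add split: if_splits)
qed

lemma E_ins: "E P (u @ [D i, X i] @ v) = E P (u @ v) + 2 * ((if P i then length v + 1 else 0) + length (filter (\<lambda>g. P (gidx g)) u))"
  by (simp add: E_append algebra_simps)

lemma sg_ins: "sg P (u @ [D i, X i] @ v) = (sg P (u @ v) :: 'k::comm_ring_1)"
  by (simp only: sg_def E_ins power_add power_mult) simp

lemma E_map: "(\<And>g. g \<in> set w \<Longrightarrow> P' (gidx (mapg \<pi> g)) = P (gidx g)) \<Longrightarrow> E P' (map (mapg \<pi>) w) = E P w"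
proof (induction w)
  case (Cons g w)
  have "isD (mapg \<pi> g) = isD g" by (cases g) auto
  then show ?case using Cons by auto
qed simp

lemma sum_wdeg:
  "set w \<subseteq> letters N \<Longrightarrow> (\<Sum>i\<in>{1..N}. wdeg w i) = int (length (filter (\<lambda>g. \<not> isD g) w)) - int (length (filter isD w))"
proof (induction w)
  case Nil
  then show ?case by (simp add: wdeg_def)
next
  case (Cons g w)
  have wd: "wdeg (g # w) i = wdeg w i + (if g = X i then 1 else 0) - (if g = D i then 1 else 0)" for i
    by (auto simp: wdeg_def)
  have g: "gidx g \<in> {1..N}" using Cons.prems by (auto simp: letters_def)
  have s1: "(\<Sum>i\<in>{1..N}. (if g = X i then 1 else 0::int)) = (if isD g then 0 else 1)"
    using g by (cases g) auto
  have s2: "(\<Sum>i\<in>{1..N}. (if g = D i then 1 else 0::int)) = (if isD g then 1 else 0)"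
    using g by (cases g) auto
  have "(\<Sum>i\<in>{1..N}. wdeg (g # w) i) = (\<Sum>i\<in>{1..N}. wdeg w i) + (if isD g then 0 else 1) - (if isD g then 1 else 0)"
    unfolding wd sum.distrib sum_subtractf s1 s2 by simp
  then show ?case using Cons by auto
qed

lemma Gamma_even: "set w \<subseteq> letters N \<Longrightarrow> wdeg w \<in> Gamma N \<longleftrightarrow> even (length w)"
proof -
  assume w: "set w \<subseteq> letters N"
  have l: "length w = length (filter (\<lambda>g. \<not> isD g) w) + length (filter isD w)"
    using sum_length_filter_compl[of isD w] by simp
  show ?thesis unfolding Gamma_def using sum_wdeg[OF w] l by (simp add: even_diff)
qed

lemma word_par_count: "word_par a w = length (filter (\<lambda>g. a < gidx g) w) mod 2"
proof -
  have "sum_list (map (gpar a) w) = length (filter (\<lambda>g. a < gidx g) w)"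
    by (induction w) (auto simp: gpar_def)
  then show ?thesis by (simp add: word_par_def)
qed

lemma sub_self: "fa_sub f f = (fa_zero :: 'k::comm_ring_1 fa)" by (simp add: fa_sub_def fa_zero_def)

lemma cls_eq_iff:
  assumes "f \<in> fa_carrier (a + b)" "g \<in> fa_carrier (a + b)"
  shows "cls s a b f = cls s a b g \<longleftrightarrow> fa_sub f g \<in> rel_ideal s a (a + b)"
proof
  assume "cls s a b f = cls s a b g"
  moreover have "f \<in> cls s a b f" using assms(1) by (simp add: cls_def sub_self rel_ideal.zero)
  ultimately have "fa_sub g f \<in> rel_ideal s a (a + b)" by (simp add: cls_def)
  then have "fa_smult (-1) (fa_sub g f) \<in> rel_ideal s a (a + b)" by (rule rel_ideal.smult)
  moreover have "fa_smult (-1) (fa_sub g f) = fa_sub f g" by (auto simp: fa_smult_def fa_sub_def)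
  ultimately show "fa_sub f g \<in> rel_ideal s a (a + b)" by simp
next
  assume fg: "fa_sub f g \<in> rel_ideal s a (a + b)"
  have "fa_sub f h \<in> rel_ideal s a (a + b) \<longleftrightarrow> fa_sub g h \<in> rel_ideal s a (a + b)" for h
  proof
    assume "fa_sub f h \<in> rel_ideal s a (a + b)"
    from I_sub[OF this fg] show "fa_sub g h \<in> rel_ideal s a (a + b)"
      by (simp add: fa_sub_def)
  next
    assume "fa_sub g h \<in> rel_ideal s a (a + b)"
    from rel_ideal.add[OF fg this] show "fa_sub f h \<in> rel_ideal s a (a + b)"
      by (simp add: fa_sub_def fa_add_def)
  qed
  then show "cls s a b f = cls s a b g" by (auto simp: cls_def)
qed

lemma carrier_add: fixes f g :: "'k::comm_ring_1 fa" shows "f \<in> fa_carrier N \<Longrightarrow> g \<in> fa_carrier N \<Longrightarrow> fa_add f g \<in> fa_carrier N"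
proof -
  assume f: "f \<in> fa_carrier N" and g: "g \<in> fa_carrier N"
  have "{w. fa_add f g w \<noteq> 0} \<subseteq> {w. f w \<noteq> 0} \<union> {w. g w \<noteq> 0}" by (auto simp: fa_add_def)
  moreover have "finite ({w. f w \<noteq> 0} \<union> {w. g w \<noteq> 0})" using f g by (simp add: fa_carrier_def)
  ultimately have "finite {w. fa_add f g w \<noteq> 0}" by (rule finite_subset)
  moreover have "set w \<subseteq> letters N" if "fa_add f g w \<noteq> 0" for w
    using that f g by (cases "f w = 0") (auto simp: fa_carrier_def fa_add_def)
  ultimately show ?thesis by (simp add: fa_carrier_def)
qed

lemma carrier_smult: fixes f :: "'k::comm_ring_1 fa" shows "f \<in> fa_carrier N \<Longrightarrow> fa_smult c f \<in> fa_carrier N"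
proof -
  assume f: "f \<in> fa_carrier N"
  have "{w. fa_smult c f w \<noteq> 0} \<subseteq> {w. f w \<noteq> 0}" by (auto simp: fa_smult_def)
  moreover have "finite {w. f w \<noteq> 0}" using f by (simp add: fa_carrier_def)
  ultimately have "finite {w. fa_smult c f w \<noteq> 0}" by (rule finite_subset)
  moreover have "set w \<subseteq> letters N" if "fa_smult c f w \<noteq> 0" for w
    using that f by (cases "f w = 0") (auto simp: fa_carrier_def fa_smult_def)
  ultimately show ?thesis by (simp add: fa_carrier_def)
qed

lemma mult_nz: "fa_mult f g w \<noteq> 0 \<Longrightarrow> \<exists>i\<le>length w. f (take i w) \<noteq> 0 \<and> g (drop i w) \<noteq> 0"
  unfolding fa_mult_def by (metis (no_types, lifting) atMost_iff mult_not_zero sum.neutral)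

lemma carrier_mult:
  assumes f: "f \<in> fa_carrier N" and g: "g \<in> fa_carrier N"
  shows "fa_mult f g \<in> fa_carrier N"
proof -
  have sub: "{w. fa_mult f g w \<noteq> 0} \<subseteq> (\<lambda>(x, y). x @ y) ` ({w. f w \<noteq> 0} \<times> {w. g w \<noteq> 0})"
  proof
    fix w assume "w \<in> {w. fa_mult f g w \<noteq> 0}"
    then have "fa_mult f g w \<noteq> 0" by simp
    then obtain i where "f (take i w) \<noteq> 0" "g (drop i w) \<noteq> 0" using mult_nz by blast
    then show "w \<in> (\<lambda>(x, y). x @ y) ` ({w. f w \<noteq> 0} \<times> {w. g w \<noteq> 0})"
      by (intro image_eqI[of _ _ "(take i w, drop i w)"]) auto
  qed
  have fin: "finite {w. fa_mult f g w \<noteq> 0}"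
    using f g by (intro finite_subset[OF sub]) (auto simp: fa_carrier_def)
  have "set w \<subseteq> letters N" if nz: "fa_mult f g w \<noteq> 0" for w
  proof -
    obtain i where "f (take i w) \<noteq> 0" "g (drop i w) \<noteq> 0" using mult_nz[OF nz] by blast
    then have "set (take i w) \<subseteq> letters N" "set (drop i w) \<subseteq> letters N" using f g by (auto simp: fa_carrier_def)
    then show ?thesis by (metis append_take_drop_id le_sup_iff set_append)
  qed
  then show ?thesis using fin by (simp add: fa_carrier_def)
qed

lemma CA_iff: "f \<in> CA s a b \<longleftrightarrow> f \<in> fa_carrier (a + b) \<and> (\<forall>w. f w \<noteq> 0 \<longrightarrow> even (length w))"
proof -
  have "f \<in> fa_carrier (a + b) \<Longrightarrow> f w \<noteq> 0 \<Longrightarrow> wdeg w \<in> Gamma (a + b) \<longleftrightarrow> even (length w)" for w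
    by (rule Gamma_even) (auto simp: fa_carrier_def)
  then show ?thesis unfolding CA_def by auto
qed

lemma CA_add: "f \<in> CA s a b \<Longrightarrow> g \<in> CA s a b \<Longrightarrow> fa_add f g \<in> CA s a b"
proof -
  assume f: "f \<in> CA s a b" and g: "g \<in> CA s a b"
  have "even (length w)" if "fa_add f g w \<noteq> 0" for w
    using that f g by (cases "f w = 0") (auto simp: CA_iff fa_add_def)
  then show ?thesis using f g carrier_add by (auto simp: CA_iff)
qed
lemma CA_smult: "f \<in> CA s a b \<Longrightarrow> fa_smult c f \<in> CA s a b"
proof -
  assume f: "f \<in> CA s a b"
  have "even (length w)" if "fa_smult c f w \<noteq> 0" for w
    using that f by (cases "f w = 0") (auto simp: CA_iff fa_smult_def)
  then show ?thesis using f carrier_smult by (auto simp: CA_iff)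
qed
lemma CA_mult: "f \<in> CA s a b \<Longrightarrow> g \<in> CA s a b \<Longrightarrow> fa_mult f g \<in> CA s a b"
proof -
  assume f: "f \<in> CA s a b" and g: "g \<in> CA s a b"
  have "even (length w)" if nz: "fa_mult f g w \<noteq> 0" for w
  proof -
    obtain i where "i \<le> length w" "f (take i w) \<noteq> 0" "g (drop i w) \<noteq> 0" using mult_nz[OF nz] by blast
    then have "even (length (take i w))" "even (length (drop i w))" using f g by (auto simp: CA_iff)
    then show ?thesis using \<open>i \<le> length w\<close> by (metis append_take_drop_id even_add length_append)
  qed
  then show ?thesis using f g carrier_mult by (auto simp: CA_iff)
qed
lemma CA_one: "fa_one \<in> CA s a b"
  by (auto simp: CA_iff fa_carrier_def fa_one_def)




definition cb :: "bool \<Rightarrow> nat \<Rightarrow> gen \<Rightarrow> gen \<Rightarrow> bool" where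
  "cb s a u v = (s \<longleftrightarrow> odd (gpar a u * gpar a v))"

lemma coef_cb: "((if s then 1 else -1) * (-1) ^ (gpar a u * gpar a v) :: 'k::comm_ring_1) = (if cb s a u v then -1 else 1)"
  by (cases "even (gpar a u * gpar a v)") (auto simp: cb_def)

definition Tm :: "nat \<Rightarrow> (nat \<Rightarrow> nat) \<Rightarrow> (nat \<Rightarrow> bool) \<Rightarrow> 'k::comm_ring_1 fa \<Rightarrow> 'k fa" where
  "Tm N \<pi>' P f = (\<lambda>w. if set w \<subseteq> letters N then sg P (map (mapg \<pi>') w) * f (map (mapg \<pi>') w) else 0)"

lemma fa_one_mono: "fa_one = mono []" by (simp add: fa_one_def mono_def)
lemma sub_fz: "fa_sub f fa_zero = (f :: 'k::comm_ring_1 fa)" by (simp add: fa_sub_def fa_zero_def)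

lemma expand:
  "fa_mult (fa_mult (mono u) (fa_sub (sbr s a \<alpha> \<beta>) (if d then fa_one else fa_zero))) (mono v)
   = fa_sub (fa_add (mono (u @ [\<alpha>, \<beta>] @ v))
        (fa_smult (if cb s a \<alpha> \<beta> then -1 else 1) (mono (u @ [\<beta>, \<alpha>] @ v))))
        (if d then mono (u @ v) else (fa_zero :: 'k::comm_ring_1 fa))"
  unfolding sbr_def coef_cb
  by (cases d) (simp_all add: fa_one_mono mult_sub_left mult_sub_right mult_add_left mult_add_right
      mult_smult_left mult_smult_right mono_mult mult_fz_left mult_fz_right)

lemma gidx_mapg: "gidx (mapg \<pi> g) = \<pi> (gidx g)" by (cases g) auto

locale twist =
  fixes N :: nat and \<pi> \<pi>' :: "nat \<Rightarrow> nat" and P :: "nat \<Rightarrow> bool" and s s' :: bool and a a' :: nat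
  assumes pr: "\<And>i. i \<in> {1..N} \<Longrightarrow> \<pi> i \<in> {1..N}"
    and pr': "\<And>i. i \<in> {1..N} \<Longrightarrow> \<pi>' i \<in> {1..N}"
    and inv1: "\<And>i. i \<in> {1..N} \<Longrightarrow> \<pi>' (\<pi> i) = i"
    and inv2: "\<And>i. i \<in> {1..N} \<Longrightarrow> \<pi> (\<pi>' i) = i"
    and sign: "\<And>g1 g2. g1 \<in> letters N \<Longrightarrow> g2 \<in> letters N \<Longrightarrow>
        (cb s a g1 g2 = cb s' a' (mapg \<pi> g1) (mapg \<pi> g2)) = (P (gidx g1) = P (gidx g2))"
    and par: "\<And>w. set w \<subseteq> letters N \<Longrightarrow> even (length w) \<Longrightarrow> word_par a' (map (mapg \<pi>) w) = word_par a w"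
begin

lemma mu_let: "g \<in> letters N \<Longrightarrow> mapg \<pi> g \<in> letters N"
  using pr[of "gidx g"] by (auto simp: letters_def gidx_mapg)
lemma nu_let: "g \<in> letters N \<Longrightarrow> mapg \<pi>' g \<in> letters N"
  using pr'[of "gidx g"] by (auto simp: letters_def gidx_mapg)
lemma nu_mu: "g \<in> letters N \<Longrightarrow> mapg \<pi>' (mapg \<pi> g) = g"
  using inv1[of "gidx g"] by (cases g) (auto simp: letters_def)
lemma mu_nu: "g \<in> letters N \<Longrightarrow> mapg \<pi> (mapg \<pi>' g) = g"
  using inv2[of "gidx g"] by (cases g) (auto simp: letters_def)
lemma map_mu_let: "set w \<subseteq> letters N \<Longrightarrow> set (map (mapg \<pi>) w) \<subseteq> letters N"
  using mu_let by auto
lemma map_nu_let: "set w \<subseteq> letters N \<Longrightarrow> set (map (mapg \<pi>') w) \<subseteq> letters N"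
  using nu_let by auto
lemma map_nu_mu: "set w \<subseteq> letters N \<Longrightarrow> map (mapg \<pi>') (map (mapg \<pi>) w) = w"
  using nu_mu by (induction w) auto
lemma map_mu_nu: "set w \<subseteq> letters N \<Longrightarrow> map (mapg \<pi>) (map (mapg \<pi>') w) = w"
  using mu_nu by (induction w) auto

abbreviation T :: "'k::comm_ring_1 fa \<Rightarrow> 'k fa" where "T \<equiv> Tm N \<pi>' P"

lemma T_app: "set z \<subseteq> letters N \<Longrightarrow> T f z = sg P (map (mapg \<pi>') z) * f (map (mapg \<pi>') z)"
  by (simp add: Tm_def)
lemma T_out: "\<not> set z \<subseteq> letters N \<Longrightarrow> T f z = 0"
  by (simp add: Tm_def)

lemma T_add: "T (fa_add f g) = fa_add (T f) (T g)"
  by (auto simp: Tm_def fa_add_def distrib_left)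
lemma T_sub: "T (fa_sub f g) = fa_sub (T f) (T g)"
  by (auto simp: Tm_def fa_sub_def right_diff_distrib)
lemma T_smult: "T (fa_smult c f) = fa_smult c (T f)"
  by (auto simp: Tm_def fa_smult_def mult.left_commute)
lemma T_zero: "T fa_zero = fa_zero"
  by (auto simp: Tm_def fa_zero_def)

lemma T_mono:
  assumes w: "set w \<subseteq> letters N"
  shows "T (mono w) = fa_smult (sg P w) (mono (map (mapg \<pi>) w))"
proof
  fix z
  show "T (mono w) z = fa_smult (sg P w) (mono (map (mapg \<pi>) w)) z"
  proof (cases "set z \<subseteq> letters N")
    case True
    have "map (mapg \<pi>') z = w \<longleftrightarrow> z = map (mapg \<pi>) w"
      using map_mu_nu[OF True] map_nu_mu[OF w] by auto
    then show ?thesis using True by (auto simp: T_app fa_smult_def mono_def)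
  next
    case False
    then have "z \<noteq> map (mapg \<pi>) w" using map_mu_let[OF w] by metis
    then show ?thesis using False by (simp add: T_out fa_smult_def mono_def)
  qed
qed

lemma inj_pi: "i \<in> {1..N} \<Longrightarrow> j \<in> {1..N} \<Longrightarrow> \<pi> i = \<pi> j \<longleftrightarrow> i = j"
  by (metis inv1)

lemma rels_form:
  assumes "r \<in> rels s a N"
  shows "\<exists>\<alpha> \<beta> d. \<alpha> \<in> letters N \<and> \<beta> \<in> letters N
     \<and> r = fa_sub (sbr s a \<alpha> \<beta>) (if d then fa_one else fa_zero)
     \<and> (d \<longrightarrow> (\<exists>i. \<alpha> = D i \<and> \<beta> = X i))
     \<and> fa_sub (sbr s' a' (mapg \<pi> \<alpha>) (mapg \<pi> \<beta>)) (if d then fa_one else fa_zero) \<in> (rels s' a' N :: 'k::comm_ring_1 fa set)"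
proof -
  from assms consider (DX) i j where "r = fa_sub (sbr s a (D i) (X j)) (if i = j then fa_one else fa_zero)" "i \<in> {1..N}" "j \<in> {1..N}"
    | (XX) i j where "r = sbr s a (X i) (X j)" "i \<in> {1..N}" "j \<in> {1..N}"
    | (DD) i j where "r = sbr s a (D i) (D j)" "i \<in> {1..N}" "j \<in> {1..N}"
    unfolding rels_def by blast
  then show ?thesis
  proof cases
    case DX
    have e: "fa_sub (sbr s' a' (mapg \<pi> (D i)) (mapg \<pi> (X j))) (if i = j then fa_one else fa_zero)
       = (fa_sub (sbr s' a' (D (\<pi> i)) (X (\<pi> j))) (if \<pi> i = \<pi> j then fa_one else fa_zero) :: 'k fa)"
      using inj_pi[OF DX(2,3)] by simp
    have mem: "fa_sub (sbr s' a' (mapg \<pi> (D i)) (mapg \<pi> (X j))) (if i = j then fa_one else fa_zero) \<in> (rels s' a' N :: 'k fa set)"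
      unfolding e rels_def using pr[OF DX(2)] pr[OF DX(3)] by blast
    have "D i \<in> letters N \<and> X j \<in> letters N \<and> r = fa_sub (sbr s a (D i) (X j)) (if i = j then fa_one else fa_zero)
      \<and> ((i = j) \<longrightarrow> (\<exists>k. D i = D k \<and> X j = X k)) \<and> fa_sub (sbr s' a' (mapg \<pi> (D i)) (mapg \<pi> (X j))) (if i = j then fa_one else fa_zero) \<in> (rels s' a' N :: 'k fa set)"
      using DX mem by (auto simp: letters_def)
    then show ?thesis by blast
  next
    case XX
    have mem: "fa_sub (sbr s' a' (mapg \<pi> (X i)) (mapg \<pi> (X j))) (if False then fa_one else fa_zero) \<in> (rels s' a' N :: 'k fa set)"
    proof -
      have "sbr s' a' (X (\<pi> i)) (X (\<pi> j)) \<in> {sbr s' a' (X i) (X j) :: 'k fa | i j. i \<in> {1..N} \<and> j \<in> {1..N}}"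
        using pr[OF XX(2)] pr[OF XX(3)] by blast
      then show ?thesis unfolding rels_def if_False sub_fz mapg.simps by (rule UnI2[THEN UnI1])
    qed
    have "X i \<in> letters N \<and> X j \<in> letters N \<and> r = fa_sub (sbr s a (X i) (X j)) (if False then fa_one else fa_zero)
      \<and> (False \<longrightarrow> (\<exists>k. X i = D k \<and> X j = X k)) \<and> fa_sub (sbr s' a' (mapg \<pi> (X i)) (mapg \<pi> (X j))) (if False then fa_one else fa_zero) \<in> (rels s' a' N :: 'k fa set)"
      using XX mem by (auto simp: letters_def sub_fz)
    then show ?thesis by blast
  next
    case DD
    have mem: "fa_sub (sbr s' a' (mapg \<pi> (D i)) (mapg \<pi> (D j))) (if False then fa_one else fa_zero) \<in> (rels s' a' N :: 'k fa set)"
    proof -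
      have "sbr s' a' (D (\<pi> i)) (D (\<pi> j)) \<in> {sbr s' a' (D i) (D j) :: 'k fa | i j. i \<in> {1..N} \<and> j \<in> {1..N}}"
        using pr[OF DD(2)] pr[OF DD(3)] by blast
      then show ?thesis unfolding rels_def if_False sub_fz mapg.simps by (rule UnI2)
    qed
    have "D i \<in> letters N \<and> D j \<in> letters N \<and> r = fa_sub (sbr s a (D i) (D j)) (if False then fa_one else fa_zero)
      \<and> (False \<longrightarrow> (\<exists>k. D i = D k \<and> D j = X k)) \<and> fa_sub (sbr s' a' (mapg \<pi> (D i)) (mapg \<pi> (D j))) (if False then fa_one else fa_zero) \<in> (rels s' a' N :: 'k fa set)"
      using DD mem by (auto simp: letters_def sub_fz)
    then show ?thesis by blast
  qed
qed

end




lemma alg_id: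
  fixes S1 S2 S3 c c' x y w :: "'k::comm_ring_1"
  assumes "c * S2 = S1 * c'" "d \<Longrightarrow> S3 = S1"
  shows "S1 * x + c * (S2 * y) - (if d then S3 * w else 0) = S1 * (x + c' * y - (if d then w else 0))"
proof -
  have "c * (S2 * y) = S1 * (c' * y)" using assms(1) by (metis mult.assoc)
  then show ?thesis using assms(2) by (cases d) (simp_all add: distrib_left right_diff_distrib)
qed

context twist
begin

lemma T_zero': "T (\<lambda>w. 0 :: 'k::comm_ring_1) = (\<lambda>w. 0)" by (rule ext) (simp add: Tm_def)

lemma T_gen:
  fixes r :: "'k::comm_ring_1 fa"
  assumes r: "r \<in> rels s a N" and u: "set u \<subseteq> letters N" and v: "set v \<subseteq> letters N"
  shows "T (fa_mult (fa_mult (mono u) r) (mono v)) \<in> rel_ideal s' a' N"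
proof -
  obtain \<alpha> \<beta> d where al: "\<alpha> \<in> letters N" and be: "\<beta> \<in> letters N"
    and rr: "r = fa_sub (sbr s a \<alpha> \<beta>) (if d then fa_one else fa_zero)"
    and dd: "d \<longrightarrow> (\<exists>i. \<alpha> = D i \<and> \<beta> = X i)"
    and mem: "fa_sub (sbr s' a' (mapg \<pi> \<alpha>) (mapg \<pi> \<beta>)) (if d then fa_one else fa_zero) \<in> (rels s' a' N :: 'k fa set)"
    using rels_form[OF r] by blast
  define S1 where "S1 = (sg P (u @ [\<alpha>, \<beta>] @ v) :: 'k)"
  define S2 where "S2 = (sg P (u @ [\<beta>, \<alpha>] @ v) :: 'k)"
  define S3 where "S3 = (sg P (u @ v) :: 'k)"
  define c where "c = (if cb s a \<alpha> \<beta> then -1 else 1 :: 'k)"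
  define c' where "c' = (if cb s' a' (mapg \<pi> \<alpha>) (mapg \<pi> \<beta>) then -1 else 1 :: 'k)"
  have l1: "set (u @ [\<alpha>, \<beta>] @ v) \<subseteq> letters N" and l2: "set (u @ [\<beta>, \<alpha>] @ v) \<subseteq> letters N"
    and l3: "set (u @ v) \<subseteq> letters N" using u v al be by auto
  have swap: "c * S2 = S1 * c'"
  proof -
    have "S2 = (if P (gidx \<alpha>) = P (gidx \<beta>) then 1 else -1) * S1"
      unfolding S1_def S2_def by (rule sg_swap)
    then show ?thesis using sign[OF al be] unfolding c_def c'_def
      by (cases "cb s a \<alpha> \<beta>"; cases "cb s' a' (mapg \<pi> \<alpha>) (mapg \<pi> \<beta>)"; cases "P (gidx \<alpha>) = P (gidx \<beta>)") auto
  qed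
  have ins: "d \<Longrightarrow> S3 = S1" using dd sg_ins unfolding S1_def S3_def by metis
  let ?r' = "fa_sub (sbr s' a' (mapg \<pi> \<alpha>) (mapg \<pi> \<beta>)) (if d then fa_one else fa_zero) :: 'k fa"
  let ?u = "map (mapg \<pi>) u" and ?v = "map (mapg \<pi>) v"
  have eq: "T (fa_mult (fa_mult (mono u) r) (mono v)) = fa_smult S1 (fa_mult (fa_mult (mono ?u) ?r') (mono ?v))"
  proof (rule ext)
    fix z
    have lhs: "T (fa_mult (fa_mult (mono u) r) (mono v)) z
        = S1 * mono (?u @ [mapg \<pi> \<alpha>, mapg \<pi> \<beta>] @ ?v) z + c * (S2 * mono (?u @ [mapg \<pi> \<beta>, mapg \<pi> \<alpha>] @ ?v) z)
          - (if d then S3 * mono (?u @ ?v) z else 0)"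
      unfolding rr expand T_sub T_add T_smult T_mono[OF l1] T_mono[OF l2]
      by (cases d) (simp_all add: T_mono[OF l3] T_zero T_zero' fa_sub_def fa_add_def fa_smult_def fa_zero_def S1_def S2_def S3_def c_def)
    have rhs: "fa_smult S1 (fa_mult (fa_mult (mono ?u) ?r') (mono ?v)) z
        = S1 * (mono (?u @ [mapg \<pi> \<alpha>, mapg \<pi> \<beta>] @ ?v) z + c' * mono (?u @ [mapg \<pi> \<beta>, mapg \<pi> \<alpha>] @ ?v) z
          - (if d then mono (?u @ ?v) z else 0))"
      unfolding expand
      by (cases d) (simp_all add: fa_sub_def fa_add_def fa_smult_def fa_zero_def c'_def)
    show "T (fa_mult (fa_mult (mono u) r) (mono v)) z = fa_smult S1 (fa_mult (fa_mult (mono ?u) ?r') (mono ?v)) z"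
      unfolding lhs rhs by (rule alg_id[OF swap ins])
  qed
  have "set ?u \<subseteq> letters N" "set ?v \<subseteq> letters N" using map_mu_let u v by auto
  then have "fa_mult (fa_mult (mono ?u) ?r') (mono ?v) \<in> rel_ideal s' a' N"
    using mem by (intro rel_ideal.gen)
  then show ?thesis unfolding eq by (rule rel_ideal.smult)
qed

lemma T_ideal: "(f :: 'k::comm_ring_1 fa) \<in> rel_ideal s a N \<Longrightarrow> T f \<in> rel_ideal s' a' N"
proof (induction rule: rel_ideal.induct)
  case zero
  then show ?case by (simp add: T_zero rel_ideal.zero)
next
  case (gen r u v)
  then show ?case by (rule T_gen)
next
  case (add f g)
  then show ?case by (simp add: T_add rel_ideal.add)
next
  case (smult f c)
  then show ?case by (simp add: T_smult rel_ideal.smult)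
qed

lemma T_nz: "T f z \<noteq> 0 \<Longrightarrow> set z \<subseteq> letters N \<and> f (map (mapg \<pi>') z) \<noteq> 0"
  by (auto simp: Tm_def split: if_splits)

lemma T_carrier:
  assumes "(f :: 'k::comm_ring_1 fa) \<in> fa_carrier N"
  shows "T f \<in> fa_carrier N"
proof -
  have sub: "{z. T f z \<noteq> 0} \<subseteq> map (mapg \<pi>) ` {w. f w \<noteq> 0}"
  proof
    fix z assume "z \<in> {z. T f z \<noteq> 0}"
    then have z: "set z \<subseteq> letters N" and nz: "f (map (mapg \<pi>') z) \<noteq> 0" using T_nz by auto
    show "z \<in> map (mapg \<pi>) ` {w. f w \<noteq> 0}"
      using map_mu_nu[OF z] nz by (intro image_eqI[of _ _ "map (mapg \<pi>') z"]) auto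
  qed
  have "finite {z. T f z \<noteq> 0}" using assms
    by (intro finite_subset[OF sub] finite_imageI) (simp add: fa_carrier_def)
  moreover have "T f z \<noteq> 0 \<Longrightarrow> set z \<subseteq> letters N" for z using T_nz by auto
  ultimately show ?thesis by (simp add: fa_carrier_def)
qed

lemma T_CA:
  assumes N: "a + b = N" "a' + b' = N" and f: "(f :: 'k::comm_ring_1 fa) \<in> CA s a b"
  shows "T f \<in> CA s' a' b'"
proof -
  have "T f \<in> fa_carrier N" using f N by (intro T_carrier) (simp add: CA_iff)
  moreover have "even (length z)" if "T f z \<noteq> 0" for z
    using T_nz[OF that] f by (auto simp: CA_iff)
  ultimately show ?thesis using N by (auto simp: CA_iff)
qed

lemma T_CApar:
  assumes N: "a + b = N" "a' + b' = N" and f: "(f :: 'k::comm_ring_1 fa) \<in> CA_par s a b e"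
  shows "T f \<in> CA_par s' a' b' e"
proof -
  have fc: "f \<in> CA s a b" using f by (simp add: CA_par_def)
  have "word_par a' z = e" if nz: "T f z \<noteq> 0" for z
  proof -
    have z: "set z \<subseteq> letters N" and fz: "f (map (mapg \<pi>') z) \<noteq> 0" using T_nz[OF nz] by auto
    have ev: "even (length (map (mapg \<pi>') z))" using fz fc by (auto simp: CA_iff)
    have "word_par a' z = word_par a' (map (mapg \<pi>) (map (mapg \<pi>') z))" using map_mu_nu[OF z] by simp
    also have "\<dots> = word_par a (map (mapg \<pi>') z)" using par[OF map_nu_let[OF z] ev] .
    also have "\<dots> = e" using f fz by (auto simp: CA_par_def)
    finally show ?thesis .
  qed
  then show ?thesis using T_CA[OF N fc] by (simp add: CA_par_def)
qed

lemma T_mult: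
  assumes N: "a + b = N" and f: "(f :: 'k::comm_ring_1 fa) \<in> CA s a b" and g: "g \<in> CA s a b"
  shows "T (fa_mult f g) = fa_mult (T f) (T g)"
proof (rule ext)
  fix z
  show "T (fa_mult f g) z = fa_mult (T f) (T g) z"
  proof (cases "set z \<subseteq> letters N")
    case True
    define w where "w = map (mapg \<pi>') z"
    have lw: "length w = length z" by (simp add: w_def)
    have "T (fa_mult f g) z = (\<Sum>i\<le>length w. sg P w * (f (take i w) * g (drop i w)))"
      using True by (simp add: T_app fa_mult_def w_def sum_distrib_left)
    also have "\<dots> = (\<Sum>i\<le>length z. T f (take i z) * T g (drop i z))"
      unfolding lw
    proof (rule sum.cong)
      fix i assume "i \<in> {..length z}"
      have lt: "set (take i z) \<subseteq> letters N" "set (drop i z) \<subseteq> letters N"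
        using True by (meson order_trans set_take_subset set_drop_subset)+
      have tw: "map (mapg \<pi>') (take i z) = take i w" "map (mapg \<pi>') (drop i z) = drop i w"
        by (simp_all add: w_def take_map drop_map)
      show "sg P w * (f (take i w) * g (drop i w)) = T f (take i z) * T g (drop i z)"
      proof (cases "f (take i w) \<noteq> 0 \<and> g (drop i w) \<noteq> 0")
        case True
        then have "even (length (drop i w))" using g by (auto simp: CA_iff)
        then have "sg P w = (sg P (take i w) * sg P (drop i w) :: 'k)"
          using sg_append_even[of "drop i w" P "take i w"] by simp
        then show ?thesis unfolding T_app[OF lt(1)] T_app[OF lt(2)] tw by (simp add: mult_ac)
      next
        case False
        then show ?thesis unfolding T_app[OF lt(1)] T_app[OF lt(2)] tw by auto
      qed
    qed simp
    also have "\<dots> = fa_mult (T f) (T g) z" by (simp add: fa_mult_def)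
    finally show ?thesis .
  next
    case False
    have "T f (take i z) * T g (drop i z) = 0" for i
    proof -
      have "\<not> set (take i z) \<subseteq> letters N \<or> \<not> set (drop i z) \<subseteq> letters N"
        using False by (metis append_take_drop_id le_sup_iff set_append)
      then show ?thesis
      proof
        assume "\<not> set (take i z) \<subseteq> letters N"
        then have "T f (take i z) = 0" by (rule T_out)
        then show ?thesis by simp
      next
        assume "\<not> set (drop i z) \<subseteq> letters N"
        then have "T g (drop i z) = 0" by (rule T_out)
        then show ?thesis by simp
      qed
    qed
    then show ?thesis using False by (simp add: T_out fa_mult_def)
  qed
qed

lemma T_one: "T fa_one = (fa_one :: 'k::comm_ring_1 fa)"
proof -
  have "T (mono []) = fa_smult (sg P []) (mono (map (mapg \<pi>) [])) " by (rule T_mono) simp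
  then show ?thesis by (simp add: fa_one_mono sg_def fa_smult_def)
qed

lemma TT:
  assumes P': "\<And>i. i \<in> {1..N} \<Longrightarrow> P' (\<pi> i) = P i" and f: "(f :: 'k::comm_ring_1 fa) \<in> fa_carrier N"
  shows "Tm N \<pi> P' (T f) = f"
proof (rule ext)
  fix z
  show "Tm N \<pi> P' (T f) z = f z"
  proof (cases "set z \<subseteq> letters N")
    case True
    have e: "E P' (map (mapg \<pi>) z) = E P z"
    proof (rule E_map)
      fix g assume "g \<in> set z"
      then have "gidx g \<in> {1..N}" using True by (auto simp: letters_def)
      then show "P' (gidx (mapg \<pi> g)) = P (gidx g)" by (simp add: gidx_mapg P')
    qed
    have "Tm N \<pi> P' (T f) z = sg P' (map (mapg \<pi>) z) * (sg P z * f z)"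
      using True map_mu_let[OF True] map_nu_mu[OF True] by (simp add: Tm_def)
    also have "\<dots> = f z" using sg_sq[of P z] by (simp add: sg_def e mult.assoc[symmetric])
    finally show ?thesis .
  next
    case False
    then show ?thesis using f by (auto simp: Tm_def fa_carrier_def)
  qed
qed

end




lemma filt_count:
  assumes w: "set w \<subseteq> letters N" and ev: "even (length w)"
    and Q: "\<And>g. g \<in> letters N \<Longrightarrow> Q (mapg \<pi> g) \<longleftrightarrow> \<not> R g"
  shows "length (filter Q (map (mapg \<pi>) w)) mod 2 = length (filter R w) mod 2"
proof -
  have "filter (Q \<circ> mapg \<pi>) w = filter (\<lambda>g. \<not> R g) w"
    using w Q by (intro filter_cong) auto
  then have e: "length (filter Q (map (mapg \<pi>) w)) = length (filter (\<lambda>g. \<not> R g) w)"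
    by (simp add: filter_map)
  have "length (filter R w) + length (filter (\<lambda>g. \<not> R g) w) = length w"
    by (rule sum_length_filter_compl)
  then show ?thesis unfolding e using ev by presburger
qed

theorem mainTheorem16:
  fixes p q :: nat
  assumes "p + q > 0"
  shows "C_super_iso TYPE('k::{alg_closed_field, field_char_0}) True p q False q p"
proof -
  define N where "N = p + q"
  define \<pi> where "\<pi> = (\<lambda>i::nat. if i \<le> p then i + q else i - p)"
  define \<pi>' where "\<pi>' = (\<lambda>i::nat. if i \<le> q then i + p else i - q)"
  define P where "P = (\<lambda>i::nat. p < i)"
  define P' where "P' = (\<lambda>i::nat. i \<le> q)"
  have N1: "p + q = N" and N2: "q + p = N" by (simp_all add: N_def)
  have lidx: "g \<in> letters N \<Longrightarrow> 1 \<le> gidx g \<and> gidx g \<le> N" for g by (simp add: letters_def)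
  interpret A: twist N \<pi> \<pi>' P True False p q
  proof
    show "\<pi> i \<in> {1..N}" if "i \<in> {1..N}" for i using that by (auto simp: \<pi>_def N_def)
    show "\<pi>' i \<in> {1..N}" if "i \<in> {1..N}" for i using that by (auto simp: \<pi>'_def N_def)
    show "\<pi>' (\<pi> i) = i" if "i \<in> {1..N}" for i using that by (auto simp: \<pi>_def \<pi>'_def N_def)
    show "\<pi> (\<pi>' i) = i" if "i \<in> {1..N}" for i using that by (auto simp: \<pi>_def \<pi>'_def N_def)
  next
    fix g1 g2 assume g1: "g1 \<in> letters N" and g2: "g2 \<in> letters N"
    show "(cb True p g1 g2 = cb False q (mapg \<pi> g1) (mapg \<pi> g2)) = (P (gidx g1) = P (gidx g2))"
      using lidx[OF g1] lidx[OF g2]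
      by (auto simp: cb_def gpar_def gidx_mapg \<pi>_def P_def N_def)
  next
    fix w assume w: "set w \<subseteq> letters N" and ev: "even (length w)"
    show "word_par q (map (mapg \<pi>) w) = word_par p w"
      unfolding word_par_count
      by (rule filt_count[OF w ev]) (auto simp: gidx_mapg \<pi>_def N_def letters_def)
  qed
  interpret B: twist N \<pi>' \<pi> P' False True q p
  proof
    show "\<pi>' i \<in> {1..N}" if "i \<in> {1..N}" for i using that by (auto simp: \<pi>'_def N_def)
    show "\<pi> i \<in> {1..N}" if "i \<in> {1..N}" for i using that by (auto simp: \<pi>_def N_def)
    show "\<pi> (\<pi>' i) = i" if "i \<in> {1..N}" for i using that by (auto simp: \<pi>_def \<pi>'_def N_def)
    show "\<pi>' (\<pi> i) = i" if "i \<in> {1..N}" for i using that by (auto simp: \<pi>_def \<pi>'_def N_def)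
  next
    fix g1 g2 assume g1: "g1 \<in> letters N" and g2: "g2 \<in> letters N"
    show "(cb False q g1 g2 = cb True p (mapg \<pi>' g1) (mapg \<pi>' g2)) = (P' (gidx g1) = P' (gidx g2))"
      using lidx[OF g1] lidx[OF g2]
      by (auto simp: cb_def gpar_def gidx_mapg \<pi>'_def P'_def N_def)
  next
    fix w assume w: "set w \<subseteq> letters N" and ev: "even (length w)"
    show "word_par p (map (mapg \<pi>') w) = word_par q w"
      unfolding word_par_count
      by (rule filt_count[OF w ev]) (auto simp: gidx_mapg \<pi>'_def N_def letters_def)
  qed
  let ?T = "Tm N \<pi>' P :: 'k fa \<Rightarrow> 'k fa"
  let ?S = "Tm N \<pi> P' :: 'k fa \<Rightarrow> 'k fa"
  have ST: "?S (?T f) = f" if "f \<in> fa_carrier N" for f :: "'k fa"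
    by (rule A.TT[OF _ that]) (auto simp: P_def P'_def \<pi>_def N_def)
  have TS: "?T (?S g) = g" if "g \<in> fa_carrier N" for g :: "'k fa"
    by (rule B.TT[OF _ that]) (auto simp: P_def P'_def \<pi>'_def N_def)
  have CAp: "f \<in> fa_carrier N" if "f \<in> CA True p q" for f :: "'k fa" using that N1 by (simp add: CA_iff)
  have CAm: "f \<in> fa_carrier N" if "f \<in> CA False q p" for f :: "'k fa" using that N2 by (simp add: CA_iff)
  have TCA: "?T f \<in> CA False q p" if "f \<in> CA True p q" for f using A.T_CA[OF N1 N2 that] .
  have SCA: "?S f \<in> CA True p q" if "f \<in> CA False q p" for f using B.T_CA[OF N2 N1 that] .
  have eqP: "cls True p q f = cls True p q g \<longleftrightarrow> fa_sub f g \<in> rel_ideal True p N"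
    if "f \<in> fa_carrier N" "g \<in> fa_carrier N" for f g :: "'k fa"
    using cls_eq_iff[of f p q g True] that N1 by simp
  have eqM: "cls False q p f = cls False q p g \<longleftrightarrow> fa_sub f g \<in> rel_ideal False q N"
    if "f \<in> fa_carrier N" "g \<in> fa_carrier N" for f g :: "'k fa"
    using cls_eq_iff[of f q p g False] that N2 by simp
  define \<Phi> where "\<Phi> = (\<lambda>X. cls False q p (?T (SOME f. f \<in> CA True p q \<and> X = cls True p q f)))"
  have \<Phi>c: "\<Phi> (cls True p q f) = cls False q p (?T f)" if f: "f \<in> CA True p q" for f
  proof -
    define f0 where "f0 = (SOME f0. f0 \<in> CA True p q \<and> cls True p q f = cls True p q f0)"
    have "f0 \<in> CA True p q \<and> cls True p q f = cls True p q f0"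
      unfolding f0_def by (rule someI[of _ f]) (simp add: f)
    then have f0: "f0 \<in> CA True p q" and e: "cls True p q f0 = cls True p q f" by auto
    have "fa_sub f0 f \<in> rel_ideal True p N" using e eqP CAp[OF f0] CAp[OF f] by blast
    then have "?T (fa_sub f0 f) \<in> rel_ideal False q N" by (rule A.T_ideal)
    then have "fa_sub (?T f0) (?T f) \<in> rel_ideal False q N" by (simp add: A.T_sub)
    then have "cls False q p (?T f0) = cls False q p (?T f)"
      using eqM A.T_carrier[OF CAp[OF f0]] A.T_carrier[OF CAp[OF f]] by blast
    then show ?thesis unfolding \<Phi>_def f0_def[symmetric] .
  qed
  have sublin: "fa_sub (fa_add x y) (fa_add z w) = fa_add (fa_sub x z) (fa_sub y w)" for x y z w :: "'k fa"
    by (auto simp: fa_sub_def fa_add_def)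
  have subsm: "fa_sub (fa_smult c x) (fa_smult c z) = fa_smult c (fa_sub x z)" for c and x z :: "'k fa"
    by (auto simp: fa_sub_def fa_smult_def right_diff_distrib)
  have submul: "fa_sub (fa_mult x y) (fa_mult z w) = fa_add (fa_mult (fa_sub x z) y) (fa_mult z (fa_sub y w))" for x y z w :: "'k fa"
    by (simp add: mult_sub_left mult_sub_right) (auto simp: fa_sub_def fa_add_def)
  show ?thesis
    unfolding C_super_iso_def
  proof (intro exI[of _ \<Phi>] conjI ballI allI impI)
    show "bij_betw \<Phi> (cls True p q ` CA True p q) (cls False q p ` CA False q p)"
      unfolding bij_betw_def
    proof
      show "inj_on \<Phi> (cls True p q ` CA True p q)"
      proof (rule inj_onI, elim imageE)
        fix X Y f g assume e: "\<Phi> X = \<Phi> Y" and X: "X = cls True p q f" and f: "f \<in> CA True p q"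
          and Y: "Y = cls True p q g" and g: "g \<in> CA True p q"
        have "cls False q p (?T f) = cls False q p (?T g)" using e unfolding X Y \<Phi>c[OF f] \<Phi>c[OF g] .
        then have "fa_sub (?T f) (?T g) \<in> rel_ideal False q N"
          using eqM A.T_carrier[OF CAp[OF f]] A.T_carrier[OF CAp[OF g]] by blast
        then have "?S (fa_sub (?T f) (?T g)) \<in> rel_ideal True p N" by (rule B.T_ideal)
        then have "fa_sub f g \<in> rel_ideal True p N"
          by (simp add: B.T_sub ST CAp f g)
        then show "X = Y" unfolding X Y using eqP CAp[OF f] CAp[OF g] by blast
      qed
    next
      show "\<Phi> ` cls True p q ` CA True p q = cls False q p ` CA False q p"
      proof
        show "\<Phi> ` cls True p q ` CA True p q \<subseteq> cls False q p ` CA False q p"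
          using \<Phi>c TCA by auto
      next
        show "cls False q p ` CA False q p \<subseteq> \<Phi> ` cls True p q ` CA True p q"
        proof
          fix Y :: "'k fa set" assume "Y \<in> cls False q p ` CA False q p"
          then obtain g :: "'k fa" where Y: "Y = cls False q p g" and g: "g \<in> CA False q p" by blast
          have "Y = \<Phi> (cls True p q (?S g))" unfolding Y \<Phi>c[OF SCA[OF g]] TS[OF CAm[OF g]] ..
          then show "Y \<in> \<Phi> ` cls True p q ` CA True p q" using SCA[OF g] by blast
        qed
      qed
    qed
  next
    fix f g h h' assume f: "f \<in> CA True p q" and g: "g \<in> CA True p q"
      and H: "h \<in> fa_carrier (q + p) \<and> h' \<in> fa_carrier (q + p) \<and> \<Phi> (cls True p q f) = cls False q p h \<and> \<Phi> (cls True p q g) = cls False q p h'"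
    have h: "h \<in> fa_carrier N" and h': "h' \<in> fa_carrier N" using H N2 by auto
    have Tf: "?T f \<in> fa_carrier N" and Tg: "?T g \<in> fa_carrier N" using A.T_carrier CAp f g by auto
    have df: "fa_sub (?T f) h \<in> rel_ideal False q N" using H \<Phi>c[OF f] eqM[OF Tf h] by simp
    have dg: "fa_sub (?T g) h' \<in> rel_ideal False q N" using H \<Phi>c[OF g] eqM[OF Tg h'] by simp
    show "\<Phi> (cls True p q (fa_add f g)) = cls False q p (fa_add h h')"
    proof -
      have "fa_sub (?T (fa_add f g)) (fa_add h h') \<in> rel_ideal False q N"
        unfolding A.T_add sublin using df dg by (rule rel_ideal.add)
      moreover have "?T (fa_add f g) \<in> fa_carrier N" using A.T_carrier CAp CA_add f g by blast
      moreover have "fa_add h h' \<in> fa_carrier N" using carrier_add h h' by blast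
      ultimately show ?thesis unfolding \<Phi>c[OF CA_add[OF f g]] using eqM by blast
    qed
    show "\<Phi> (cls True p q (fa_mult f g)) = cls False q p (fa_mult h h')"
    proof -
      have "fa_sub (?T (fa_mult f g)) (fa_mult h h') \<in> rel_ideal False q N"
        unfolding A.T_mult[OF N1 f g] submul
        by (rule rel_ideal.add[OF I_mult_right[OF df Tg] I_mult_left[OF dg h]])
      moreover have "?T (fa_mult f g) \<in> fa_carrier N" using A.T_carrier CAp CA_mult f g by blast
      moreover have "fa_mult h h' \<in> fa_carrier N" using carrier_mult h h' by blast
      ultimately show ?thesis unfolding \<Phi>c[OF CA_mult[OF f g]] using eqM by blast
    qed
  next
    fix f c h assume f: "f \<in> CA True p q"
      and H: "h \<in> fa_carrier (q + p) \<and> \<Phi> (cls True p q f) = cls False q p h"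
    have h: "h \<in> fa_carrier N" using H N2 by auto
    have Tf: "?T f \<in> fa_carrier N" using A.T_carrier CAp f by auto
    have df: "fa_sub (?T f) h \<in> rel_ideal False q N" using H \<Phi>c[OF f] eqM[OF Tf h] by simp
    have "fa_sub (?T (fa_smult c f)) (fa_smult c h) \<in> rel_ideal False q N"
      unfolding A.T_smult subsm using df by (rule rel_ideal.smult)
    moreover have "?T (fa_smult c f) \<in> fa_carrier N" using A.T_carrier CAp CA_smult f by blast
    moreover have "fa_smult c h \<in> fa_carrier N" using carrier_smult h by blast
    ultimately show "\<Phi> (cls True p q (fa_smult c f)) = cls False q p (fa_smult c h)"
      unfolding \<Phi>c[OF CA_smult[OF f]] using eqM by blast
  next
    show "\<Phi> (cls True p q fa_one) = cls False q p fa_one"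
      unfolding \<Phi>c[OF CA_one] A.T_one ..
  next
    fix e :: nat
    show "\<Phi> ` cls True p q ` CA_par True p q e = cls False q p ` CA_par False q p e"
    proof
      show "\<Phi> ` cls True p q ` CA_par True p q e \<subseteq> cls False q p ` CA_par False q p e"
      proof
        fix Y :: "'k fa set" assume "Y \<in> \<Phi> ` cls True p q ` CA_par True p q e"
        then obtain f :: "'k fa" where Y: "Y = \<Phi> (cls True p q f)" and f: "f \<in> CA_par True p q e" by blast
        have fc: "f \<in> CA True p q" using f by (simp add: CA_par_def)
        show "Y \<in> cls False q p ` CA_par False q p e"
          unfolding Y \<Phi>c[OF fc] using A.T_CApar[OF N1 N2 f] by blast
      qed
    next
      show "cls False q p ` CA_par False q p e \<subseteq> \<Phi> ` cls True p q ` CA_par True p q e"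
      proof
        fix Y :: "'k fa set" assume "Y \<in> cls False q p ` CA_par False q p e"
        then obtain g :: "'k fa" where Y: "Y = cls False q p g" and g: "g \<in> CA_par False q p e" by blast
        have gc: "g \<in> CA False q p" using g by (simp add: CA_par_def)
        have Sg: "?S g \<in> CA_par True p q e" using B.T_CApar[OF N2 N1 g] .
        have "Y = \<Phi> (cls True p q (?S g))" unfolding Y \<Phi>c[OF SCA[OF gc]] TS[OF CAm[OF gc]] ..
        then show "Y \<in> \<Phi> ` cls True p q ` CA_par True p q e" using Sg by blast
      qed
    qed
  qed
qed


end
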